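(* For every NFA $\mathcal A$, the relation $P(\subseteq^{\mathrm{bw}},\sqsubset^{\mathrm{di}})$ is good for pruning on NFA: $\mathcal L(\mathrm{Prune}(\mathcal A,P(\subseteq^{\mathrm{bw}},\sqsubset^{\mathrm{di}})))=\mathcal L(\mathcal A)$.
   Context: An NFA is $\mathcal A=(\Sigma,Q,I,F,\delta)$, $\delta\subseteq Q\times\Sigma\times Q$, assumed forward and backward complete; its language is the set of finite words having a finite trace starting in $I$ and ending in $F$. Direct simulation $\sqsubseteq^{\mathrm{di}}$: in the game from $(p_0,q_0)$, at round $i$ from $(p_i,q_i)$ Spoiler picks $p_i\xrightarrow{\sigma_i}p_{i+1}$, Duplicator answers $q_i\xrightarrow{\sigma_i}q_{i+1}$; Duplicator wins the infinite play if $p_i\in F\Rightarrow q_i\in F$ for all $i$; $p\sqsubseteq^{\mathrm{di}}q$ iff she has a winning strategy from $(p,q)$; $\sqsubset^{\mathrm{di}}$ is its strict part. Backward finite trace inclusion: $p\subseteq^{\mathrm{bw}}q$ iff for every finite word $w$, if some $w$-trace starting in $I$ ends in $p$, then some $w$-trace starting in $I$ ends in $q$. $\mathrm{Prune}(\mathcal A,P)$ has transition set $\{t\in\delta:\nexists t'\in\delta,(t,t')\in P\}$; $P(R_b,R_f)=\{((p,\sigma,r),(p',\sigma,r'))\in\delta\times\delta:p\,R_b\,p',\ r\,R_f\,r'\}$. *)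

theory Defs
  imports Main
begin

record ('s, 'q) nfa =
  alph   :: "'s set"
  states :: "'q set"
  init   :: "'q set"
  final  :: "'q set"
  trans  :: "('q \<times> 's \<times> 'q) set"

definition is_nfa :: "('s, 'q) nfa \<Rightarrow> bool" where
  "is_nfa A \<longleftrightarrow>
     finite (alph A) \<and> finite (states A) \<and>
     init A \<subseteq> states A \<and> final A \<subseteq> states A \<and>
     trans A \<subseteq> states A \<times> alph A \<times> states A \<and>
     (\<forall>p\<in>states A. \<forall>a\<in>alph A. \<exists>q. (p, a, q) \<in> trans A) \<and>
     (\<forall>q\<in>states A. \<forall>a\<in>alph A. \<exists>p. (p, a, q) \<in> trans A)"

inductive path :: "('q \<times> 's \<times> 'q) set \<Rightarrow> 'q \<Rightarrow> 's list \<Rightarrow> 'q \<Rightarrow> bool"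
  for D where
  path_nil: "path D p [] p"
| path_cons: "(p, a, r) \<in> D \<Longrightarrow> path D r w q \<Longrightarrow> path D p (a # w) q"

definition lang :: "('s, 'q) nfa \<Rightarrow> 's list set" where
  "lang A = {w. \<exists>p\<in>init A. \<exists>q\<in>final A. path (trans A) p w q}"

coinductive dsim :: "('s, 'q) nfa \<Rightarrow> 'q \<Rightarrow> 'q \<Rightarrow> bool" for A where
  "\<lbrakk> p \<in> final A \<longrightarrow> q \<in> final A;
     \<And>a p'. (p, a, p') \<in> trans A \<Longrightarrow> \<exists>q'. (q, a, q') \<in> trans A \<and> dsim A p' q' \<rbrakk>
   \<Longrightarrow> dsim A p q"

definition dsim_strict :: "('s, 'q) nfa \<Rightarrow> 'q \<Rightarrow> 'q \<Rightarrow> bool" where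
  "dsim_strict A p q \<longleftrightarrow> dsim A p q \<and> \<not> dsim A q p"

definition bw_incl :: "('s, 'q) nfa \<Rightarrow> 'q \<Rightarrow> 'q \<Rightarrow> bool" where
  "bw_incl A p q \<longleftrightarrow>
     (\<forall>w. (\<exists>i\<in>init A. path (trans A) i w p) \<longrightarrow> (\<exists>i\<in>init A. path (trans A) i w q))"

definition prune :: "('s, 'q) nfa \<Rightarrow> (('q \<times> 's \<times> 'q) \<times> ('q \<times> 's \<times> 'q)) set \<Rightarrow> ('s, 'q) nfa" where
  "prune A P = A\<lparr> trans := {t \<in> trans A. \<not> (\<exists>t'\<in>trans A. (t, t') \<in> P)} \<rparr>"

definition prune_rel :: "('s, 'q) nfa \<Rightarrow> ('q \<Rightarrow> 'q \<Rightarrow> bool) \<Rightarrow> ('q \<Rightarrow> 'q \<Rightarrow> bool)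
    \<Rightarrow> (('q \<times> 's \<times> 'q) \<times> ('q \<times> 's \<times> 'q)) set" where
  "prune_rel A Rb Rf = {((p, a, r), (p', a', r')). (p, a, r) \<in> trans A \<and> (p', a', r') \<in> trans A
       \<and> a' = a \<and> Rb p p' \<and> Rf r r'}"

end

theory Submission
  imports Defs
begin

lemma path_mono: "path D p w q \<Longrightarrow> D \<subseteq> E \<Longrightarrow> path E p w q"
  by (induction rule: path.induct) (auto intro: path.intros)

lemma path_Cons_iff: "path D p (b # u) q \<longleftrightarrow> (\<exists>s. (p, b, s) \<in> D \<and> path D s u q)"
  by (auto elim: path.cases intro: path.intros)

lemma path_Nil_iff: "path D p [] q \<longleftrightarrow> p = q"
  by (auto elim: path.cases intro: path.intros)

lemma path_snoc: "path D p (u @ [a]) q \<longleftrightarrow> (\<exists>r. path D p u r \<and> (r, a, q) \<in> D)"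
  by (induction u arbitrary: p) (auto simp: path_Cons_iff path_Nil_iff)

lemma dsim_refl: "dsim A p p"
proof -
  have "p = p" by simp
  then show ?thesis
    by (coinduction arbitrary: p rule: dsim.coinduct) auto
qed

lemma dsim_step: "dsim A p q \<Longrightarrow> (p, a, p') \<in> trans A \<Longrightarrow> \<exists>q'. (q, a, q') \<in> trans A \<and> dsim A p' q'"
  by (cases rule: dsim.cases) blast+

lemma dsim_trans: "dsim A x y \<Longrightarrow> dsim A y z \<Longrightarrow> dsim A x z"
proof -
  assume "dsim A x y" "dsim A y z"
  then have "\<exists>y. dsim A x y \<and> dsim A y z" by blast
  then show ?thesis
  proof (rule dsim.coinduct[where X="\<lambda>x z. \<exists>y. dsim A x y \<and> dsim A y z"])
    fix x z
    assume "\<exists>y. dsim A x y \<and> dsim A y z"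
    then obtain y where xy: "dsim A x y" and yz: "dsim A y z" by blast
    from xy have f1: "x \<in> final A \<longrightarrow> y \<in> final A" by (cases rule: dsim.cases) auto
    from yz have f2: "y \<in> final A \<longrightarrow> z \<in> final A" by (cases rule: dsim.cases) auto
    have st: "\<exists>q'. (z, a, q') \<in> trans A \<and> ((\<exists>y. dsim A x' y \<and> dsim A y q') \<or> dsim A x' q')"
      if tx: "(x, a, x') \<in> trans A" for a x'
    proof -
      obtain y' where y': "(y, a, y') \<in> trans A" "dsim A x' y'"
        using dsim_step[OF xy tx] by blast
      then obtain z' where "(z, a, z') \<in> trans A" "dsim A y' z'"
        using dsim_step[OF yz y'(1)] by blast
      then show ?thesis using y' by blast
    qed
    show "\<exists>p q. x = p \<and> z = q \<and> (p \<in> final A \<longrightarrow> q \<in> final A) \<and>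
      (\<forall>a p'. (p, a, p') \<in> trans A \<longrightarrow> (\<exists>q'. (q, a, q') \<in> trans A \<and>
         ((\<exists>y. dsim A p' y \<and> dsim A y q') \<or> dsim A p' q')))"
      using f1 f2 st by blast
  qed
qed

lemma dsim_final: "dsim A p q \<Longrightarrow> p \<in> final A \<Longrightarrow> q \<in> final A"
  by (cases rule: dsim.cases) blast+

lemma main_lemma:
  assumes nfa: "is_nfa A"
  defines "T \<equiv> trans (prune A (prune_rel A (bw_incl A) (dsim_strict A)))"
  shows "\<forall>q. (\<exists>i\<in>init A. path (trans A) i w q) \<longrightarrow> (\<exists>q'. dsim A q q' \<and> (\<exists>i\<in>init A. path T i w q'))"
proof (induction w rule: rev_induct)
  case Nil
  show ?case
    by (auto elim: path.cases intro: path.intros dsim_refl)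
next
  case (snoc a u)
  have TA: "T \<subseteq> trans A" unfolding T_def prune_def by auto
  have fin: "finite (states A)" and tr: "trans A \<subseteq> states A \<times> alph A \<times> states A"
    using nfa unfolding is_nfa_def by auto
  define m where "m r = card {s \<in> states A. dsim_strict A r s}" for r
  have inner: "\<And>r. (\<exists>p. (\<exists>i\<in>init A. path (trans A) i u p) \<and> (p, a, r) \<in> trans A) \<Longrightarrow>
      \<exists>r'. dsim A r r' \<and> (\<exists>i\<in>init A. path T i (u @ [a]) r')"
  proof -
    fix r0
    show "(\<exists>p. (\<exists>i\<in>init A. path (trans A) i u p) \<and> (p, a, r0) \<in> trans A) \<Longrightarrow>
      \<exists>r'. dsim A r0 r' \<and> (\<exists>i\<in>init A. path T i (u @ [a]) r')"
    proof (induction "m r0" arbitrary: r0 rule: less_induct)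
      case (less r)
      then obtain p i where i: "i \<in> init A" and pi: "path (trans A) i u p" and pr: "(p, a, r) \<in> trans A"
        by blast
      from snoc.IH i pi obtain p' i' where pp': "dsim A p p'" and i': "i' \<in> init A"
        and pi': "path T i' u p'" by blast
      from dsim_step[OF pp' pr] obtain r1 where pr1: "(p', a, r1) \<in> trans A" and rr1: "dsim A r r1"
        by blast
      show ?case
      proof (cases "(p', a, r1) \<in> T")
        case True
        then have "path T i' (u @ [a]) r1" using pi' unfolding path_snoc by blast
        then show ?thesis using rr1 i' by blast
      next
        case False
        then obtain p'' a' r2 where t2: "(p'', a', r2) \<in> trans A"
          and rel: "((p', a, r1), (p'', a', r2)) \<in> prune_rel A (bw_incl A) (dsim_strict A)"
          using pr1 unfolding T_def prune_def by auto
        from rel have a': "a' = a" and bw: "bw_incl A p' p''" and st: "dsim_strict A r1 r2"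
          unfolding prune_rel_def by auto
        have "path (trans A) i' u p'" using path_mono[OF pi' TA] .
        then obtain i'' where i'': "i'' \<in> init A" "path (trans A) i'' u p''"
          using bw i' unfolding bw_incl_def by blast
        have st1: "dsim A r1 r2" and st2: "\<not> dsim A r2 r1" using st unfolding dsim_strict_def by auto
        have rr2: "dsim A r r2" using dsim_trans[OF rr1 st1] .
        have nr2: "\<not> dsim A r2 r"
        proof
          assume "dsim A r2 r"
          from dsim_trans[OF this rr1] st2 show False by simp
        qed
        have r2s: "r2 \<in> states A" using t2 tr by auto
        have sub: "{s \<in> states A. dsim_strict A r2 s} \<subset> {s \<in> states A. dsim_strict A r s}"
        proof
          show "{s \<in> states A. dsim_strict A r2 s} \<subseteq> {s \<in> states A. dsim_strict A r s}"
          proof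
            fix s assume "s \<in> {s \<in> states A. dsim_strict A r2 s}"
            then have s: "s \<in> states A" "dsim A r2 s" "\<not> dsim A s r2" unfolding dsim_strict_def by auto
            have "dsim A r s" using dsim_trans[OF rr2 s(2)] .
            moreover have "\<not> dsim A s r"
            proof
              assume "dsim A s r"
              from dsim_trans[OF this rr2] s(3) show False by simp
            qed
            ultimately show "s \<in> {s \<in> states A. dsim_strict A r s}" using s(1) unfolding dsim_strict_def by auto
          qed
          have "r2 \<in> {s \<in> states A. dsim_strict A r s}" using r2s rr2 nr2 unfolding dsim_strict_def by blast
          moreover have "r2 \<notin> {s \<in> states A. dsim_strict A r2 s}" unfolding dsim_strict_def by blast
          ultimately show "{s \<in> states A. dsim_strict A r2 s} \<noteq> {s \<in> states A. dsim_strict A r s}" by blast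
        qed
        have "m r2 < m r" unfolding m_def by (rule psubset_card_mono) (use fin sub in auto)
        moreover have "\<exists>p. (\<exists>i\<in>init A. path (trans A) i u p) \<and> (p, a, r2) \<in> trans A"
          using i'' t2 a' by blast
        ultimately obtain r' where r2r': "dsim A r2 r'" and pr': "\<exists>i\<in>init A. path T i (u @ [a]) r'"
          using less.hyps by blast
        show ?thesis using dsim_trans[OF rr2 r2r'] pr' by blast
      qed
    qed
  qed
  show ?case
  proof (intro allI impI)
    fix q
    assume "\<exists>i\<in>init A. path (trans A) i (u @ [a]) q"
    then have "\<exists>p. (\<exists>i\<in>init A. path (trans A) i u p) \<and> (p, a, q) \<in> trans A"
      unfolding path_snoc by blast
    then show "\<exists>q'. dsim A q q' \<and> (\<exists>i\<in>init A. path T i (u @ [a]) q')" by (rule inner)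
  qed
qed

theorem theorem5p9:
  fixes A :: "('s, 'q) nfa"
  assumes "is_nfa A"
  shows "lang (prune A (prune_rel A (bw_incl A) (dsim_strict A))) = lang A"
proof -
  define B where "B = prune A (prune_rel A (bw_incl A) (dsim_strict A))"
  have iB: "init B = init A" and fB: "final B = final A" and TA: "trans B \<subseteq> trans A"
    unfolding B_def prune_def by auto
  have "lang B = lang A"
  proof
    show "lang B \<subseteq> lang A"
    proof
      fix w assume "w \<in> lang B"
      then obtain i q where "i \<in> init A" "q \<in> final A" "path (trans B) i w q"
        unfolding lang_def iB fB by blast
      then show "w \<in> lang A" unfolding lang_def using path_mono[OF _ TA] by blast
    qed
  next
    show "lang A \<subseteq> lang B"
    proof
      fix w assume "w \<in> lang A"
      then obtain i q where "i \<in> init A" "q \<in> final A" "path (trans A) i w q"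
        unfolding lang_def by blast
      have mainl: "\<forall>q. (\<exists>i\<in>init A. path (trans A) i w q) \<longrightarrow> (\<exists>q'. dsim A q q' \<and> (\<exists>i\<in>init A. path (trans B) i w q'))"
        using main_lemma[OF assms, of w] unfolding B_def .
      have "\<exists>i\<in>init A. path (trans A) i w q" using \<open>i \<in> init A\<close> \<open>path (trans A) i w q\<close> by blast
      with mainl have "\<exists>q'. dsim A q q' \<and> (\<exists>i\<in>init A. path (trans B) i w q')" by blast
      then obtain q' i' where "dsim A q q'" "i' \<in> init A"
        "path (trans B) i' w q'" by blast
      moreover have "q' \<in> final A" by (rule dsim_final[OF \<open>dsim A q q'\<close> \<open>q \<in> final A\<close>])
      ultimately show "w \<in> lang B"
        unfolding lang_def iB fB by blast
    qed
  qed
  then show ?thesis unfolding B_def .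
qed

end
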